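(* Let $p$ be a prime and $k,\ell,m$ integers with $k>0$ and $\ell,m\ge0$; put $q=p^k$, $Q=p^{\ell}$, $R=p^m$, and \[ f_5(X)=X^{qQ+q}-X^{qQ+1}-X^{Q+q}+X^{Q+1}+X^{q^2R}+X^{qR}+X^{R}. \] Then $f_5(X)$ permutes $\mathbb{F}_{q^3}$ if and only if $\gcd(q-1,Q+1)=1$, or equivalently, if and only if $p=2$ and $\operatorname{ord}_2(k)\le\operatorname{ord}_2(\ell)$.
   Context: A polynomial permutes $\mathbb{F}_{q^3}$ if the induced map $\mathbb{F}_{q^3}\to\mathbb{F}_{q^3}$ is a bijection. For a nonzero integer $N$, $\operatorname{ord}_2(N)$ is the largest integer $s\ge0$ with $2^s\mid N$, and $\operatorname{ord}_2(0)=\infty$. *)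

theory Defs
  imports "HOL-Computational_Algebra.Computational_Algebra" "HOL-Library.Extended_Nat"
begin

definition ord2 :: "nat \<Rightarrow> enat" where
  "ord2 n = (if n = 0 then \<infinity> else enat (multiplicity (2::nat) n))"

definition f5 :: "nat \<Rightarrow> nat \<Rightarrow> nat \<Rightarrow> 'a::field \<Rightarrow> 'a" where
  "f5 q Q R x = x ^ (q*Q + q) - x ^ (q*Q + 1) - x ^ (Q + q) + x ^ (Q + 1)
               + x ^ (q^2 * R) + x ^ (q * R) + x ^ R"

end

theory Submission
  imports Defs "HOL-Number_Theory.Cong"
begin

lemma nt_coprime:
  fixes a a' b s :: nat
  assumes "a = 2^s * a'" "odd a'" "2^s dvd b"
  shows "gcd (2^a - 1) (2^b + 1) = (1::nat)"
proof -
  obtain b' where b: "b = 2^s * b'" using assms(3) by blast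
  define d where "d = gcd (2^a - 1) (2^b + 1 :: nat)"
  define u :: int where "u = 2^(2^s)"
  have ua: "(2::int)^a = u^a'" unfolding u_def assms(1) by (simp add: power_mult)
  have ub: "(2::int)^b = u^b'" unfolding u_def b by (simp add: power_mult)
  have d1: "int d dvd 2^a - 1"
  proof -
    have "d dvd 2^a - 1" unfolding d_def by simp
    hence "int d dvd int (2^a - 1)" by (simp only: int_dvd_int_iff)
    also have "int (2^a - 1) = 2^a - 1"
      using of_nat_diff[of 1 "2^a::nat", where 'a=int] by simp
    finally show ?thesis .
  qed
  have d2: "int d dvd 2^b + 1"
  proof -
    have "d dvd 2^b + 1" unfolding d_def by simp
    hence "int d dvd int (2^b + 1)" by (simp only: int_dvd_int_iff)
    thus ?thesis by (simp add: add.commute)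
  qed
  have c1: "[u^a' = 1] (mod int d)" using d1 ua by (simp add: cong_iff_dvd_diff)
  have c2: "[u^b' = -1] (mod int d)" using d2 ub by (simp add: cong_iff_dvd_diff)
  have "[(u^a')^b' = 1^b'] (mod int d)" by (rule cong_pow[OF c1])
  hence e1: "[u^(a'*b') = 1] (mod int d)" by (simp add: power_mult)
  have "[(u^b')^a' = (-1)^a'] (mod int d)" by (rule cong_pow[OF c2])
  hence e2: "[u^(a'*b') = -1] (mod int d)" using assms(2) by (simp add: power_mult[symmetric] mult.commute)
  have "[1 = (-1::int)] (mod int d)" using e1 e2 by (meson cong_sym cong_trans)
  hence "int d dvd 2" by (simp add: cong_iff_dvd_diff)
  hence dd2: "d dvd 2" by presburger
  have "a > 0" using assms(1,2) by (cases a') auto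
  hence "odd (2^a - 1 :: nat)" by simp
  moreover have "d dvd 2^a - 1" unfolding d_def by simp
  ultimately have "odd d" using dvd_trans by blast
  with dd2 have "d = 1"
    by (metis dvd_antisym dvd_refl even_numeral nat_dvd_1_iff_1 prime_nat_iff two_is_prime_nat)
  thus ?thesis unfolding d_def .
qed

lemma nt_not_coprime:
  fixes a b b' s :: nat
  assumes "2^(Suc s) dvd a" "b = 2^s * b'" "odd b'"
  shows "gcd (2^a - 1) (2^b + 1) \<noteq> (1::nat)"
proof -
  obtain a' where a: "a = 2^(Suc s) * a'" using assms(1) by blast
  define u :: int where "u = 2^(2^s)"
  have ua: "(2::int)^a = (u^2)^a'" unfolding u_def a by (simp add: power_mult[symmetric] mult.commute)
  have ub: "(2::int)^b = u^b'" unfolding u_def assms(2) by (simp add: power_mult)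
  have "[u = -1] (mod u+1)" by (simp add: cong_iff_dvd_diff)
  hence "[u^b' = (-1)^b'] (mod u+1)" by (rule cong_pow)
  hence "(u+1) dvd 2^b + 1" using ub assms(3) by (simp add: cong_iff_dvd_diff)
  moreover have "[u^2 = (-1)^2] (mod u+1)" using \<open>[u = -1] (mod u+1)\<close> by (rule cong_pow)
  hence "[(u^2)^a' = 1^a'] (mod u+1)" by (intro cong_pow) simp
  hence "(u+1) dvd 2^a - 1" using ua by (simp add: cong_iff_dvd_diff)
  ultimately have "(u+1) dvd gcd (2^a - 1) (2^b + 1)" by simp
  moreover have "u + 1 \<ge> 3" unfolding u_def
  proof -
    have "(2::int)^(2^s) \<ge> 2^1" by (intro power_increasing) auto
    thus "(2::int)^(2^s) + 1 \<ge> 3" by simp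
  qed
  moreover have "gcd (2^a - 1) (2^b + 1 :: int) > 0"
  proof -
    have "(2::int)^b + 1 > 0" by (smt (verit) zero_less_power)
    thus ?thesis by (metis gcd_pos_int order_less_irrefl)
  qed
  ultimately have "gcd (2^a - 1) (2^b + 1 :: int) \<ge> 3" by (meson dual_order.trans zdvd_imp_le)
  moreover have "int (gcd (2^a - 1) (2^b + 1 :: nat)) = gcd (2^a - 1) (2^b + 1 :: int)"
    using of_nat_diff[of 1 "2^a::nat", where 'a=int] by (simp add: gcd_int_int_eq[symmetric] add.commute del: of_nat_diff)
  ultimately show ?thesis by auto
qed

datatype 'a ww = W (wa: 'a) (wb: 'a)

instantiation ww :: (comm_ring_1) comm_ring_1
begin
definition "0 = W 0 0"
definition "1 = W 1 0"
definition "x + y = W (wa x + wa y) (wb x + wb y)"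
definition "x - y = W (wa x - wa y) (wb x - wb y)"
definition "- x = W (- wa x) (- wb x)"
definition "x * y = W (wa x * wa y - wb x * wb y) (wa x * wb y + wb x * wa y - wb x * wb y)"
instance
proof
  fix a b c :: "'a ww"
  show "a * b * c = a * (b * c)" by (simp add: times_ww_def algebra_simps)
  show "a * b = b * a" by (simp add: times_ww_def algebra_simps)
  show "1 * a = a" by (simp add: times_ww_def one_ww_def)
  show "(a + b) * c = a * c + b * c" by (simp add: times_ww_def plus_ww_def algebra_simps)
  show "a + b + c = a + (b + c)" by (simp add: plus_ww_def algebra_simps)
  show "a + b = b + a" by (simp add: plus_ww_def algebra_simps)
  show "0 + a = a" by (simp add: plus_ww_def zero_ww_def)
  show "- a + a = 0" by (simp add: plus_ww_def zero_ww_def uminus_ww_def)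
  show "a - b = a + - b" by (simp add: plus_ww_def minus_ww_def uminus_ww_def)
  show "(0::'a ww) \<noteq> 1" by (simp add: zero_ww_def one_ww_def)
qed
end

lemma W_mult: "W a b * W c d = W (a*c - b*d) (a*d + b*c - b*d)" by (simp add: times_ww_def)
lemma W_add: "W a b + W c d = W (a+c) (b+d)" by (simp add: plus_ww_def)

lemma W_pow_fst: "(W a 0) ^ n = W (a ^ n) (0::'a::comm_ring_1)"
  by (induction n) (simp_all add: one_ww_def W_mult)

lemma omega_cube: "(W 0 (1::'a::comm_ring_1)) ^ 3 = 1"
  by (simp add: numeral_3_eq_3 one_ww_def W_mult)


lemma two_ww: "(2::'a::comm_ring_1) = 0 \<Longrightarrow> (2::'a ww) = 0"
proof -
  assume a: "(2::'a) = 0"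
  have "(2::'a ww) = 1 + 1" by (rule one_add_one[symmetric])
  also have "\<dots> = W (1 + 1) 0" unfolding one_ww_def W_add by simp
  also have "(1::'a) + 1 = 2" by (rule one_add_one)
  finally show ?thesis using a by (simp add: zero_ww_def)
qed

lemma frob2:
  fixes x y :: "'b::comm_ring_1"
  assumes "(2::'b) = 0"
  shows "(x + y) ^ (2 ^ j) = x ^ (2 ^ j) + y ^ (2 ^ j)"
proof (induction j)
  case (Suc j)
  have "(x + y) ^ (2 ^ Suc j) = ((x + y) ^ (2 ^ j)) ^ 2" by (simp add: power_mult[symmetric] mult.commute)
  also have "\<dots> = (x ^ (2 ^ j) + y ^ (2 ^ j)) ^ 2" by (simp add: Suc)
  also have "\<dots> = (x ^ (2 ^ j)) ^ 2 + (y ^ (2 ^ j)) ^ 2 + 2 * x ^ (2 ^ j) * y ^ (2 ^ j)"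
    by (simp add: power2_eq_square algebra_simps)
  also have "\<dots> = (x ^ (2 ^ j)) ^ 2 + (y ^ (2 ^ j)) ^ 2" using assms by simp
  also have "\<dots> = x ^ (2 ^ Suc j) + y ^ (2 ^ Suc j)" by (simp add: power_mult[symmetric] mult.commute)
  finally show ?case .
qed simp

lemma omega_pow4: "(W 0 (1::'a::comm_ring_1)) ^ (4 ^ i) = W 0 1"
proof (induction i)
  case (Suc i)
  have "(W 0 (1::'a)) ^ (4 ^ Suc i) = ((W 0 1) ^ (4 ^ i)) ^ 4" by (simp add: power_mult[symmetric] mult.commute)
  also have "\<dots> = (W 0 1) ^ 3 * W 0 (1::'a)" unfolding Suc by (metis numeral_3_eq_3 numeral_Bit0 power_Suc2 Suc_numeral semiring_norm(2,5,8))
  also have "\<dots> = W 0 1" by (simp add: omega_cube)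
  finally show ?case .
qed simp

lemma W_frob:
  fixes a b :: "'a::comm_ring_1"
  assumes "(2::'a) = 0" "even M"
  shows "(W a b) ^ (2 ^ M) = W (a ^ (2 ^ M)) (b ^ (2 ^ M))"
proof -
  have e: "W a b = W a 0 + W 0 1 * W b 0" by (simp add: W_mult W_add)
  have 2: "(2::'a ww) = 0" using assms(1) by (rule two_ww)
  obtain h where h: "M = 2 * h" using assms(2) by blast
  have "(2::nat) ^ M = 4 ^ h" unfolding h by (simp add: power_mult)
  hence om: "(W 0 (1::'a)) ^ (2 ^ M) = W 0 1" using omega_pow4[of h] by simp
  have "(W a b) ^ (2 ^ M) = (W a 0) ^ (2 ^ M) + (W 0 1) ^ (2 ^ M) * (W b 0) ^ (2 ^ M)"
    by (subst e, subst frob2[OF 2]) (simp add: power_mult_distrib)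
  also have "\<dots> = W (a ^ (2 ^ M)) (b ^ (2 ^ M))" by (simp add: om W_pow_fst W_mult W_add)
  finally show ?thesis .
qed

lemma pow_cancel:
  fixes x y :: "'b::comm_monoid_mult"
  assumes fx: "\<And>z::'b. z ^ Suc N = z" and cp: "coprime e N" and e: "e > 0" and eq: "x ^ e = y ^ e"
  shows "x = y"
proof (cases "N = 0")
  case True
  then have "e = 1" using cp by simp
  then show ?thesis using eq by simp
next
  case False
  have pw: "z ^ (j * N + 1) = z" for z :: 'b and j
  proof (induction j)
    case (Suc j)
    have "z ^ (Suc j * N + 1) = z ^ (j * N + 1) * z ^ N" by (simp add: power_add[symmetric] algebra_simps)
    also have "\<dots> = z * z ^ N" by (simp only: Suc.IH)
    also have "\<dots> = z ^ Suc N" by simp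
    finally show ?case using fx by simp
  qed simp
  obtain s where s: "[e * s = Suc 0] (mod N)" using cong_solve_coprime_nat[OF cp] by blast
  have "[e * (s + N) = e * s] (mod N)" by (simp add: cong_def algebra_simps)
  hence s2: "[e * (s + N) = 1] (mod N)" using s by (simp add: cong_trans)
  have "1 \<le> e * (s + N)" using e False by simp
  then obtain j where j: "e * (s + N) = j * N + 1" using s2 cong_le_nat by blast
  have "x = x ^ (e * (s + N))" using pw j by simp
  also have "\<dots> = (y ^ e) ^ (s + N)" by (simp add: power_mult eq)
  also have "\<dots> = y" using pw j by (simp add: power_mult[symmetric])
  finally show ?thesis .
qed

lemma ff_fix:
  fixes x :: "'a::{field,finite}"
  shows "x ^ card (UNIV :: 'a set) = x"
proof (cases "x = 0")
  case False
  have "x * (\<Prod>y\<in>UNIV-{0}. x * y) = x * x ^ (card (UNIV :: 'a set) - 1) * \<Prod>(UNIV-{0})"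
    by (simp add: prod.distrib mult_ac)
  also have "x * x ^ (card (UNIV :: 'a set) - 1) = x ^ Suc (card (UNIV :: 'a set) - 1)"
    by (subst power_Suc) auto
  also have "Suc (card (UNIV :: 'a set) - 1) = card (UNIV :: 'a set)"
    using finite_UNIV_card_ge_0[where ?'a = 'a] by simp
  also have "(\<Prod>y\<in>UNIV-{0}. x * y) = (\<Prod>y\<in>UNIV-{0}. y)"
    by (rule prod.reindex_bij_witness[of _ "\<lambda>y. y / x" "\<lambda>y. x * y"]) (use False in auto)
  finally show ?thesis
    by simp
qed (use finite_UNIV_card_ge_0[where ?'a = 'a] in auto)

lemma ff_fix_pow:
  fixes x :: "'a::{field,finite}"
  shows "x ^ (card (UNIV :: 'a set) ^ j) = x"
  by (induction j) (simp_all add: ff_fix power_mult)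

lemma ff_char:
  assumes "prime p" "card (UNIV :: 'a::{field,finite} set) = p ^ n"
  shows "CHAR('a) = p"
proof -
  have pos: "CHAR('a) > 0" by (simp add: finite_imp_CHAR_pos)
  hence pr: "prime CHAR('a)" by (rule prime_CHAR_semidom)
  have "(\<Sum>x\<in>(UNIV::'a set). x + 1) = (\<Sum>x\<in>UNIV. x)"
    by (rule sum.reindex_bij_witness[of _ "\<lambda>y. y - 1" "\<lambda>y. y + 1"]) auto
  hence "of_nat (card (UNIV::'a set)) = (0::'a)" by (simp add: sum.distrib)
  hence "CHAR('a) dvd card (UNIV::'a set)" by (simp add: of_nat_eq_0_iff_char_dvd)
  hence "CHAR('a) dvd p ^ n" using assms(2) by simp
  hence "CHAR('a) dvd p" using pr prime_dvd_power by blast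
  thus ?thesis using pr assms(1) by (simp add: primes_dvd_imp_eq)
qed

lemma frob_add:
  fixes x y :: "'a::comm_ring_1"
  assumes "prime CHAR('a)"
  shows "(x + y) ^ (CHAR('a) ^ j) = x ^ (CHAR('a) ^ j) + y ^ (CHAR('a) ^ j)"
  using freshmans_dream'[OF assms refl] .

lemma frob_diff:
  fixes x y :: "'a::comm_ring_1"
  assumes "prime CHAR('a)"
  shows "(x - y) ^ (CHAR('a) ^ j) = x ^ (CHAR('a) ^ j) - y ^ (CHAR('a) ^ j)"
proof -
  have "x ^ (CHAR('a) ^ j) = ((x - y) + y) ^ (CHAR('a) ^ j)" by simp
  also have "\<dots> = (x - y) ^ (CHAR('a) ^ j) + y ^ (CHAR('a) ^ j)" by (rule frob_add[OF assms])
  finally show ?thesis by (simp add: algebra_simps)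
qed

lemma roots_unity:
  fixes d :: nat
  assumes "d dvd card (UNIV :: 'a::{field,finite} set) - 1" "d > 1"
  shows "\<exists>z::'a. z \<noteq> 1 \<and> z ^ d = 1"
proof (rule ccontr)
  assume H: "\<not> ?thesis"
  define n where "n = card (UNIV :: 'a set)"
  obtain m where m: "n - 1 = d * m" using assms(1) unfolding n_def by blast
  have n1: "n \<ge> 2"
  proof -
    have "(0::'a) \<noteq> 1" by simp
    hence "card {0::'a, 1} = 2" by simp
    moreover have "card {0::'a, 1} \<le> n" unfolding n_def by (rule card_mono) auto
    ultimately show ?thesis by simp
  qed
  have "d * m > 0" using m n1 by linarith
  hence mpos: "m > 0" by simp
  have mlt: "m < n - 1" using m assms(2) mpos by simp
  have xm: "x ^ m = 1" if "x \<noteq> 0" for x :: 'a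
  proof -
    have "x ^ n = x" unfolding n_def by (rule ff_fix)
    moreover have "x ^ n = x ^ (n - 1) * x" using n1 by (metis Suc_diff_1 less_le_trans pos2 power_Suc2)
    ultimately have "x ^ (n - 1) = 1" using that by simp
    hence "(x ^ m) ^ d = 1" using m by (simp add: power_mult[symmetric] mult.commute)
    thus ?thesis using H by blast
  qed
  define P :: "'a poly" where "P = monom 1 m - 1"
  have "coeff P m = 1" unfolding P_def using mpos by (simp add: coeff_1)
  hence P0: "P \<noteq> 0" by auto
  have "degree P \<le> m" unfolding P_def
    by (metis degree_diff_le_max degree_1 degree_monom_le max.bounded_iff le0 order_trans)
  have "UNIV - {0} \<subseteq> {x. poly P x = 0}" unfolding P_def using xm by (auto simp: poly_monom)
  hence "card (UNIV - {0::'a}) \<le> card {x. poly P x = 0}"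
    by (intro card_mono) (auto intro: finite_subset)
  also have "\<dots> \<le> degree P" by (rule card_poly_roots_bound[OF P0])
  finally have "n - 1 \<le> m" using \<open>degree P \<le> m\<close> unfolding n_def by (simp add: card_Diff_singleton)
  thus False using mlt by simp
qed

lemma char2_eq:
  fixes x y u v :: "'b::comm_ring_1"
  assumes "(2::'b) = 0" "x + y = u + v"
  shows "x + u = y + v"
proof -
  have "x + u - (y + v) = (x + y) - (u + v) + 2 * (u - y)" by (simp add: algebra_simps)
  also have "\<dots> = 0" using assms by simp
  finally show ?thesis by simp
qed

lemma pow_comm: "((u::'b::monoid_mult) ^ i) ^ j = (u ^ j) ^ i"
  by (simp add: power_mult[symmetric] mult.commute)

lemma suff:
  fixes k l m s k' :: nat
  assumes ch: "CHAR('a::{field,finite}) = 2" and card: "card (UNIV::'a set) = 2^(3*k)"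
    and kd: "k = 2^s * k'" "odd k'" and sl: "2^s dvd l"
  shows "inj (f5 (2^k) (2^l) (2^m) :: 'a \<Rightarrow> 'a)"
proof -
  define q :: nat where "q = 2^k"
  define Q :: nat where "Q = 2^l"
  define R :: nat where "R = 2^m"
  have two: "(2::'a) = 0" using of_nat_CHAR[where 'a='a] ch by simp
  have mn: "\<And>x y::'a. x - y = x + y" by (rule minus_CHAR_2[OF ch])
  have xx: "\<And>x::'a. x + x = 0" using two by (metis mult_2 mult_zero_left)
  have fr: "\<And>(x::'a) y j. (x + y) ^ (2 ^ j) = x ^ (2 ^ j) + y ^ (2 ^ j)" by (rule frob2[OF two])
  have fq: "\<And>(x::'a) y. (x + y) ^ q = x ^ q + y ^ q" unfolding q_def by (rule fr)
  have fQ: "\<And>(x::'a) y. (x + y) ^ Q = x ^ Q + y ^ Q" unfolding Q_def by (rule fr)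
  have fR: "\<And>(x::'a) y. (x + y) ^ R = x ^ R + y ^ R" unfolding R_def by (rule fr)
  have fixj: "\<And>(x::'a) j. x ^ (2 ^ (3 * k * j)) = x"
  proof -
    fix x :: 'a and j
    have "x ^ (card (UNIV::'a set) ^ j) = x" by (rule ff_fix_pow)
    thus "x ^ (2 ^ (3 * k * j)) = x" unfolding card by (simp add: power_mult)
  qed
  have fix3: "\<And>x::'a. ((x ^ q) ^ q) ^ q = x"
  proof -
    fix x :: 'a
    have k3: "3 * k * 1 = k + k + k" by simp
    have "(2::nat) ^ (3 * k * 1) = 2 ^ k * 2 ^ k * 2 ^ k" by (simp only: k3 power_add)
    hence "((x ^ q) ^ q) ^ q = x ^ (2 ^ (3 * k * 1))" unfolding q_def
      by (simp add: power_mult)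
    thus "((x ^ q) ^ q) ^ q = x" using fixj[of x 1] by simp
  qed
  define Y :: "'a \<Rightarrow> 'a" where "Y x = x ^ q + x" for x
  define T :: "'a \<Rightarrow> 'a" where "T x = (x ^ q) ^ q + x ^ q + x" for x
  have f5eq: "f5 q Q R x = (Y x) ^ (Q + 1) + (T x) ^ R" for x :: 'a
  proof -
    have e1: "x ^ (q * Q + q) = (x ^ q) ^ Q * x ^ q" by (simp add: power_add power_mult)
    have e2: "x ^ (q * Q + 1) = (x ^ q) ^ Q * x" by (simp add: power_add power_mult)
    have e3: "x ^ (Q + q) = x ^ Q * x ^ q" by (simp add: power_add)
    have e4: "x ^ (Q + 1) = x ^ Q * x" by (simp add: power_add)
    have e5: "x ^ (q^2 * R) = ((x ^ q) ^ q) ^ R" by (simp add: power_mult power2_eq_square)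
    have e6: "x ^ (q * R) = (x ^ q) ^ R" by (simp add: power_mult)
    have "(Y x) ^ (Q + 1) = ((x ^ q) ^ Q + x ^ Q) * (x ^ q + x)"
      unfolding Y_def by (simp add: fQ)
    moreover have "(T x) ^ R = ((x ^ q) ^ q) ^ R + (x ^ q) ^ R + x ^ R"
      unfolding T_def by (simp add: fR)
    ultimately show ?thesis unfolding f5_def e1 e2 e3 e4 e5 e6 mn
      by (simp add: algebra_simps)
  qed
  have Tq: "(T x) ^ q = T x" for x
    unfolding T_def by (simp add: fq fix3 algebra_simps)
  have Yqq: "((Y x) ^ q) ^ q = Y x + (Y x) ^ q" for x
  proof -
    have "((Y x) ^ q) ^ q = x + (x ^ q) ^ q" unfolding Y_def by (simp add: fq fix3 add.commute)
    also have "\<dots> = Y x + (Y x) ^ q"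
    proof -
      have "Y x + (Y x) ^ q = x + (x ^ q) ^ q + (x ^ q + x ^ q)" unfolding Y_def fq by (simp only: ac_simps)
      thus ?thesis by (simp add: xx)
    qed
    finally show ?thesis .
  qed
  obtain M l' where Mev: "even M" and M3: "3 * k dvd M" and lev: "even l'" and ll: "l \<le> l'"
    and l3: "3 * k dvd (l' - l)" and cop: "gcd (2^M - 1) (2^l' + 1) = (1::nat)"
  proof (cases "s = 0")
    case True
    define l2 where "l2 = (if even l then l else l + 3 * k)"
    have ok: "odd k" using kd True by simp
    have "even l2" unfolding l2_def using ok by auto
    moreover have "3 * k dvd (l2 - l)" unfolding l2_def by auto
    moreover have "gcd (2^(6*k) - 1) (2^l2 + 1) = (1::nat)"
      by (rule nt_coprime[of _ 1 "3*k"]) (use ok \<open>even l2\<close> in auto)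
    moreover have "3 * k dvd 6 * k" by simp
    ultimately show ?thesis using that[of "6*k" l2] unfolding l2_def by auto
  next
    case False
    have "2 dvd (2::nat)^s" using False by simp
    hence ev: "even k" "even l" using kd(1) sl by (auto intro: dvd_trans)
    have "gcd (2^(3*k) - 1) (2^l + 1) = (1::nat)"
      by (rule nt_coprime[of _ s "3*k'"]) (use kd sl in auto)
    thus ?thesis using that[of "3*k" l] ev by auto
  qed
  obtain jM where jM: "M = 3 * k * jM" using M3 by blast
  have fM: "\<And>u::'a. u ^ (2 ^ M) = u" unfolding jM by (rule fixj)
  have fl: "\<And>u::'a. u ^ (2 ^ l') = u ^ Q"
  proof -
    fix u :: 'a
    obtain j where j: "l' - l = 3 * k * j" using l3 by blast
    have "l' = l + 3 * k * j" using j ll by linarith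
    hence "(2::nat) ^ l' = Q * 2 ^ (3 * k * j)" unfolding Q_def by (simp only: power_add)
    hence "u ^ (2 ^ l') = (u ^ Q) ^ (2 ^ (3 * k * j))" by (simp only: power_mult)
    thus "u ^ (2 ^ l') = u ^ Q" using fixj[of "u ^ Q" j] by (rule trans)
  qed
  have Wall: "\<And>z::'a ww. z ^ Suc (2 ^ M - 1) = z"
  proof -
    fix z :: "'a ww"
    obtain u v where z: "z = W u v" by (cases z)
    have s: "Suc (2 ^ M - 1) = 2 ^ M" by simp
    have "(W u v) ^ (2 ^ M) = W (u ^ (2 ^ M)) (v ^ (2 ^ M))" by (rule W_frob[OF two Mev])
    thus "z ^ Suc (2 ^ M - 1) = z" unfolding z s fM .
  qed
  have cpe: "coprime (2 ^ l' + 1) (2 ^ M - 1 :: nat)" using cop by (simp add: coprime_iff_gcd_eq_1 gcd.commute)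
  have Vpow: "(W b a) ^ (2 ^ l' + 1) = W (b ^ Q * b + a ^ Q * a) (b ^ Q * a + a ^ Q * b + a ^ Q * a)" for a b :: 'a
  proof -
    have "(W b a) ^ (2 ^ l' + 1) = (W b a) ^ (2 ^ l') * W b a" by (simp only: Suc_eq_plus1[symmetric] power_Suc2)
    also have "(W b a) ^ (2 ^ l') = W (b ^ Q) (a ^ Q)" unfolding W_frob[OF two lev] fl ..
    hence "(W b a) ^ (2 ^ l') * W b a = W (b ^ Q) (a ^ Q) * W b a" by simp
    also have "\<dots> = W (b ^ Q * b + a ^ Q * a) (b ^ Q * a + a ^ Q * b + a ^ Q * a)"
      by (simp add: W_mult mn)
    finally show ?thesis .
  qed
  show ?thesis
  proof (rule injI)
    fix x1 x2 :: 'a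
    assume "f5 (2^k) (2^l) (2^m) x1 = f5 (2^k) (2^l) (2^m) x2"
    hence h: "(Y x1) ^ (Q + 1) + (T x1) ^ R = (Y x2) ^ (Q + 1) + (T x2) ^ R"
      using f5eq unfolding q_def Q_def R_def by metis
    define a where "a = Y x1"
    define a' where "a' = Y x2"
    define b where "b = a ^ q"
    define b' where "b' = a' ^ q"
    define Z where "Z = a ^ (Q + 1)"
    define Z' where "Z' = a' ^ (Q + 1)"
    define c where "c = Z + Z'"
    have c_eq: "c = (T x1) ^ R + (T x2) ^ R"
      unfolding c_def Z_def Z'_def a_def a'_def by (rule char2_eq[OF two h])
    have cq: "c ^ q = c" unfolding c_eq by (simp add: fq pow_comm[of _ R q] Tq)
    have cqq: "(c ^ q) ^ q = c" by (simp add: cq)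
    have Zq: "Z ^ q = b ^ Q * b" "Z' ^ q = b' ^ Q * b'"
      unfolding Z_def Z'_def b_def b'_def by (simp_all only: power_add power_one_right power_mult_distrib pow_comm[of _ Q q])
    have Zqq: "(Z ^ q) ^ q = a ^ Q * a + a ^ Q * b + b ^ Q * a + b ^ Q * b"
    proof -
      have "(Z ^ q) ^ q = ((a ^ q) ^ q) ^ (Q + 1)" unfolding Z_def by (simp only: pow_comm[of _ "Q+1" q])
      also have "\<dots> = (a + b) ^ (Q + 1)" by (simp only: a_def b_def Yqq)
      also have "\<dots> = (a ^ Q + b ^ Q) * (a + b)" by (simp only: power_add power_one_right fQ)
      finally show ?thesis by (simp add: algebra_simps)
    qed
    have Zqq': "(Z' ^ q) ^ q = a' ^ Q * a' + a' ^ Q * b' + b' ^ Q * a' + b' ^ Q * b'"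
    proof -
      have "(Z' ^ q) ^ q = ((a' ^ q) ^ q) ^ (Q + 1)" unfolding Z'_def by (simp only: pow_comm[of _ "Q+1" q])
      also have "\<dots> = (a' + b') ^ (Q + 1)" by (simp only: a'_def b'_def Yqq)
      also have "\<dots> = (a' ^ Q + b' ^ Q) * (a' + b')" by (simp only: power_add power_one_right fQ)
      finally show ?thesis by (simp add: algebra_simps)
    qed
    have "(Z + Z') ^ q = Z + Z'" using cq unfolding c_def .
    hence ZA: "Z ^ q + Z' ^ q = Z + Z'" by (simp only: fq)
    hence E1': "Z ^ q + Z = Z' ^ q + Z'" by (rule char2_eq[OF two])
    have ZZ: "Z = a ^ Q * a" "Z' = a' ^ Q * a'" unfolding Z_def Z'_def by (simp_all only: power_add power_one_right)
    have E1: "b ^ Q * b + a ^ Q * a = b' ^ Q * b' + a' ^ Q * a'"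
    proof -
      have "b ^ Q * b + Z = b' ^ Q * b' + Z'" using E1' unfolding Zq .
      thus ?thesis unfolding ZZ .
    qed
    have "((Z + Z') ^ q) ^ q = Z + Z'" using cqq unfolding c_def .
    hence "(Z ^ q) ^ q + (Z' ^ q) ^ q = Z + Z'" by (simp only: fq)
    hence "(Z ^ q) ^ q + (Z' ^ q) ^ q = Z ^ q + Z' ^ q" by (rule trans[OF _ ZA[symmetric]])
    hence E2': "(Z ^ q) ^ q + Z ^ q = (Z' ^ q) ^ q + Z' ^ q" by (rule char2_eq[OF two])
    have r1: "(Z ^ q) ^ q + Z ^ q = b ^ Q * a + a ^ Q * b + a ^ Q * a"
      by (subst Zqq, subst Zq, simp only: add.assoc xx add_0_right, simp add: ac_simps)
    have r2: "(Z' ^ q) ^ q + Z' ^ q = b' ^ Q * a' + a' ^ Q * b' + a' ^ Q * a'"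
      by (subst Zqq', subst Zq, simp only: add.assoc xx add_0_right, simp add: ac_simps)
    have E2: "b ^ Q * a + a ^ Q * b + a ^ Q * a = b' ^ Q * a' + a' ^ Q * b' + a' ^ Q * a'"
      using E2' unfolding r1 r2 .
    have "(W b a) ^ (2 ^ l' + 1) = (W b' a') ^ (2 ^ l' + 1)" unfolding Vpow E1 E2 ..
    hence "W b a = W b' a'" by (rule pow_cancel[OF Wall cpe, rotated]) simp
    hence aa: "a = a'" by simp
    have c0: "c = 0" unfolding c_def Z_def Z'_def aa by (rule xx)
    have "(T x1) ^ R + (T x2) ^ R = 0 + 0" by (simp only: c_eq[symmetric] c0 add_0_right)
    hence "(T x1) ^ R + 0 = (T x2) ^ R + 0" by (rule char2_eq[OF two])
    hence e': "(T x1) ^ R = (T x2) ^ R" by (simp only: add_0_right)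
    have "(T x1 + T x2) ^ R = 0" by (simp only: fR e' xx)
    hence TT: "T x1 + T x2 = 0" by simp
    define e where "e = x1 + x2"
    have "x1 ^ q + x1 = x2 ^ q + x2" using aa unfolding a_def a'_def Y_def .
    hence "x1 ^ q + x2 ^ q = x1 + x2" by (rule char2_eq[OF two])
    hence eq: "e ^ q = e" unfolding e_def by (simp only: fq)
    have "(e ^ q) ^ q + e ^ q + e = T x1 + T x2" unfolding e_def T_def by (simp add: fq algebra_simps)
    hence "(e ^ q) ^ q + e ^ q + e = 0" unfolding TT .
    hence "e + e + e = 0" unfolding eq .
    hence "e = 0" by (simp only: xx add_0_left)
    hence "x1 + x2 = x2 + x2" unfolding e_def xx .
    thus "x1 = x2" by (rule add_right_imp_eq)
  qed
qed

lemma nec: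
  fixes p k l m :: nat
  assumes pr: "prime p" and k: "k > 0" and card: "card (UNIV::'a::{field,finite} set) = (p^k)^3"
    and g: "gcd (p^k - 1) (p^l + 1) \<noteq> 1"
  shows "\<not> inj (f5 (p^k) (p^l) (p^m) :: 'a \<Rightarrow> 'a)"
proof
  assume inj: "inj (f5 (p^k) (p^l) (p^m) :: 'a \<Rightarrow> 'a)"
  define q :: nat where "q = p^k"
  define Q :: nat where "Q = p^l"
  define R :: nat where "R = p^m"
  have card': "card (UNIV::'a set) = p ^ (k * 3)" using card by (simp add: power_mult)
  have ch: "CHAR('a) = p" by (rule ff_char[OF pr card'])
  have prC: "prime CHAR('a)" using ch pr by simp
  have fq: "\<And>(x::'a) y. (x + y) ^ q = x ^ q + y ^ q" unfolding q_def by (rule frob_add[OF prC, unfolded ch])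
  have fqd: "\<And>(x::'a) y. (x - y) ^ q = x ^ q - y ^ q" unfolding q_def by (rule frob_diff[OF prC, unfolded ch])
  have fR: "\<And>(x::'a) y. (x + y) ^ R = x ^ R + y ^ R" unfolding R_def by (rule frob_add[OF prC, unfolded ch])
  have p2: "p \<ge> 2" by (rule prime_ge_2_nat[OF pr])
  have "p ^ 1 \<le> p ^ k" by (rule power_increasing) (use k p2 in auto)
  hence q2: "q \<ge> 2" unfolding q_def using p2 by simp
  have qqq: "card (UNIV::'a set) = q * q * q" unfolding card q_def by (simp add: power3_eq_cube)
  have fix3: "\<And>x::'a. ((x ^ q) ^ q) ^ q = x"
  proof -
    fix x :: 'a
    have "((x ^ q) ^ q) ^ q = x ^ (q * q * q)" by (simp only: power_mult)
    also have "\<dots> = x" unfolding qqq[symmetric] by (rule ff_fix)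
    finally show "((x ^ q) ^ q) ^ q = x" .
  qed
  define d where "d = gcd (p^k - 1) (p^l + 1)"
  have d0: "d \<noteq> 0" unfolding d_def by simp
  have d1: "d > 1" using d0 g unfolding d_def by linarith
  have dq: "d dvd q - 1" unfolding d_def q_def by (rule gcd_dvd1)
  have dQ: "d dvd Q + 1" unfolding d_def Q_def by (rule gcd_dvd2)
  have "q - 1 dvd q * q * q - 1"
  proof -
    obtain r where r: "q = Suc r" using q2 by (cases q) auto
    have "q * q * q - 1 = (q - 1) * (q * q + q + 1)" unfolding r by (simp add: algebra_simps)
    thus ?thesis by simp
  qed
  hence "d dvd card (UNIV::'a set) - 1" unfolding qqq by (rule dvd_trans[OF dq])
  then obtain \<zeta> :: 'a where z1: "\<zeta> \<noteq> 1" and zd: "\<zeta> ^ d = 1" using roots_unity d1 by blast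
  have zq1: "\<zeta> ^ (q - 1) = 1"
  proof -
    obtain j where "q - 1 = d * j" using dq by blast
    thus ?thesis by (simp add: power_mult zd)
  qed
  have zq: "\<zeta> ^ q = \<zeta>"
  proof -
    have qs: "q = Suc (q - 1)" using q2 by simp
    have "\<zeta> ^ q = \<zeta> ^ (q - 1) * \<zeta>" by (subst qs, rule power_Suc2)
    thus ?thesis using zq1 by simp
  qed
  have zQ: "\<zeta> ^ (Q + 1) = 1"
  proof -
    obtain j where "Q + 1 = d * j" using dQ by blast
    thus ?thesis by (simp add: power_mult zd)
  qed
  \<comment> \<open>an element outside the kernel of the double difference\<close>
  define P :: "'a poly" where "P = monom 1 (q * q) - smult 2 (monom 1 q) + monom 1 1"
  have Pev: "poly P z = (z ^ q) ^ q - 2 * z ^ q + z" for z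
  proof -
    have "poly P z = z ^ (q * q) - 2 * z ^ q + z" unfolding P_def by (simp add: poly_monom)
    thus ?thesis by (simp only: power_mult)
  qed
  have qq: "q * q \<ge> 2 * q" using q2 by simp
  have "coeff P (q * q) = 1" unfolding P_def using q2 qq by (simp add: coeff_monom)
  hence P0: "P \<noteq> 0" by auto
  have dg1: "degree (monom (1::'a) (q * q)) \<le> q * q" by (rule degree_monom_le)
  have dg2: "degree (smult 2 (monom (1::'a) q)) \<le> q * q"
    using degree_smult_le[of 2 "monom (1::'a) q"] degree_monom_le[of "1::'a" q] qq by linarith
  have dg3: "degree (monom (1::'a) 1) \<le> q * q"
    using degree_monom_le[of "1::'a" 1] qq q2 by linarith
  have degP: "degree P \<le> q * q" unfolding P_def
    by (intro degree_add_le degree_diff_le dg1 dg2 dg3)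
  have "\<exists>z. poly P z \<noteq> 0"
  proof (rule ccontr)
    assume "\<not> ?thesis"
    hence "card (UNIV::'a set) \<le> card {x. poly P x = 0}" by simp
    also have "\<dots> \<le> q * q" using card_poly_roots_bound[OF P0] degP by linarith
    finally have a2: "q * q * q \<le> q * q" unfolding qqq .
    have "q * q * 2 \<le> q * q * q" using q2 by (rule mult_le_mono2)
    moreover have "q * q > 0" using q2 by simp
    ultimately show False using a2 by linarith
  qed
  then obtain z where zP: "poly P z \<noteq> 0" by blast
  define x where "x = z ^ q - z"
  have Lx: "x ^ q - x = poly P z" unfolding x_def Pev fqd
  proof -
    have "2 * z ^ q = z ^ q + z ^ q" by (rule mult_2)
    thus "(z ^ q) ^ q - z ^ q - (z ^ q - z) = (z ^ q) ^ q - 2 * z ^ q + z" by (simp add: algebra_simps)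
  qed
  have x0: "x \<noteq> 0"
  proof
    assume "x = 0"
    hence "x ^ q - x = 0" using q2 by simp
    thus False using Lx zP by simp
  qed
  have Tx: "(x ^ q) ^ q + x ^ q + x = 0" unfolding x_def fqd fix3 by (simp add: algebra_simps)
  have Rpos: "R > 0" unfolding R_def using pr by (simp add: prime_gt_0_nat)
  have Sx: "x ^ (q^2 * R) + x ^ (q * R) + x ^ R = 0"
  proof -
    have a1: "x ^ (q^2 * R) = ((x ^ q) ^ q) ^ R" by (simp only: power2_eq_square power_mult)
    have a2: "x ^ (q * R) = (x ^ q) ^ R" by (simp only: power_mult)
    have "x ^ (q^2 * R) + x ^ (q * R) + x ^ R = ((x ^ q) ^ q + x ^ q + x) ^ R"
      unfolding a1 a2 by (simp only: fR)
    also have "\<dots> = 0" unfolding Tx using Rpos by simp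
    finally show ?thesis .
  qed
  have zQ': "\<zeta> ^ Q * \<zeta> = 1" using zQ by (simp only: power_add power_one_right)
  have e1: "\<zeta> ^ (q * Q + q) = 1" by (simp only: power_add power_mult zq zQ')
  have e2: "\<zeta> ^ (q * Q + 1) = 1" by (simp only: power_add power_mult zq zQ' power_one_right)
  have e3: "\<zeta> ^ (Q + q) = 1" by (simp only: power_add zq zQ')
  have e5: "\<zeta> ^ (q^2 * R) = \<zeta> ^ R" by (simp only: power2_eq_square power_mult zq)
  have e6: "\<zeta> ^ (q * R) = \<zeta> ^ R" by (simp only: power_mult zq)
  define F1 where "F1 = x ^ (q * Q + q) - x ^ (q * Q + 1) - x ^ (Q + q) + x ^ (Q + 1)"
  have "f5 q Q R (\<zeta> * x) = F1 + \<zeta> ^ R * (x ^ (q^2 * R) + x ^ (q * R) + x ^ R)"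
    unfolding f5_def F1_def power_mult_distrib e1 e2 e3 zQ e5 e6 by (simp add: algebra_simps)
  also have "\<dots> = F1" unfolding Sx by simp
  also have "F1 = F1 + (x ^ (q^2 * R) + x ^ (q * R) + x ^ R)" unfolding Sx by simp
  also have "\<dots> = f5 q Q R x" unfolding f5_def F1_def by (simp only: add.assoc)
  finally have "f5 q Q R (\<zeta> * x) = f5 q Q R x" .
  hence "\<zeta> * x = x" using inj unfolding q_def Q_def R_def by (simp add: inj_eq)
  hence "(\<zeta> - 1) * x = 0" by (simp add: algebra_simps)
  thus False using z1 x0 by simp
qed

lemma part2:
  fixes p k l :: nat
  assumes pr: "prime p" and k: "k > 0"
  shows "gcd (p ^ k - 1) (p ^ l + 1) = 1 \<longleftrightarrow> p = 2 \<and> ord2 k \<le> ord2 l"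
proof (cases "p = 2")
  case False
  have "p > 2" using False prime_ge_2_nat[OF pr] by simp
  hence op: "odd p" using pr prime_odd_nat by blast
  hence "odd (p ^ k)" by simp
  then obtain j where j: "p ^ k = 2 * j + 1" by (metis oddE)
  hence "even (p ^ k - 1)" by simp
  moreover have "even (p ^ l + 1)" using op by simp
  ultimately have "2 dvd gcd (p ^ k - 1) (p ^ l + 1)" by simp
  hence "gcd (p ^ k - 1) (p ^ l + 1) \<noteq> 1" by (metis odd_one)
  thus ?thesis using False by simp
next
  case True
  define s where "s = multiplicity 2 k"
  obtain k' where kd: "k = 2 ^ s * k'" "\<not> 2 dvd k'"
    using multiplicity_decompose'[of k 2] k unfolding s_def by auto
  have ok': "odd k'" using kd by simp
  have o2k: "ord2 k = enat s" unfolding ord2_def s_def using k by simp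
  show ?thesis
  proof
    assume G: "gcd (p ^ k - 1) (p ^ l + 1) = 1"
    show "p = 2 \<and> ord2 k \<le> ord2 l"
    proof (rule ccontr)
      assume "\<not> ?thesis"
      hence lt: "\<not> ord2 k \<le> ord2 l" using True by simp
      have l0: "l \<noteq> 0"
      proof
        assume "l = 0"
        hence "ord2 l = \<infinity>" by (simp add: ord2_def)
        thus False using lt by simp
      qed
      define t where "t = multiplicity 2 l"
      have "t < s" using lt l0 o2k unfolding ord2_def t_def by auto
      obtain l' where ld: "l = 2 ^ t * l'" "\<not> 2 dvd l'"
        using multiplicity_decompose'[of l 2] l0 unfolding t_def by auto
      have "2 ^ Suc t dvd k" using \<open>t < s\<close> kd(1) by (metis Suc_leI dvd_mult2 le_imp_power_dvd)
      hence "gcd (2 ^ k - 1) (2 ^ l + 1) \<noteq> (1::nat)" by (rule nt_not_coprime[OF _ ld(1)]) (use ld in simp)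
      thus False using G True by simp
    qed
  next
    assume "p = 2 \<and> ord2 k \<le> ord2 l"
    hence le: "ord2 k \<le> ord2 l" by simp
    have "2 ^ s dvd l"
    proof (cases "l = 0")
      case False
      hence "s \<le> multiplicity 2 l" using le o2k unfolding ord2_def by simp
      thus ?thesis by (rule multiplicity_dvd')
    qed simp
    hence "gcd (2 ^ k - 1) (2 ^ l + 1) = (1::nat)" by (rule nt_coprime[OF kd(1) ok'])
    thus "gcd (p ^ k - 1) (p ^ l + 1) = 1" using True by simp
  qed
qed

theorem corollary1p5:
  fixes p k l m :: nat
  assumes "prime p" and "k > 0"
    and "card (UNIV :: 'a::{field,finite} set) = (p ^ k) ^ 3"
  shows "(bij (f5 (p ^ k) (p ^ l) (p ^ m) :: 'a \<Rightarrow> 'a)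
            \<longleftrightarrow> gcd (p ^ k - 1) (p ^ l + 1) = 1)
       \<and> (gcd (p ^ k - 1) (p ^ l + 1) = 1
            \<longleftrightarrow> p = 2 \<and> ord2 k \<le> ord2 l)"
proof
  have P2: "gcd (p ^ k - 1) (p ^ l + 1) = 1 \<longleftrightarrow> p = 2 \<and> ord2 k \<le> ord2 l"
    by (rule part2[OF assms(1,2)])
  show "gcd (p ^ k - 1) (p ^ l + 1) = 1 \<longleftrightarrow> p = 2 \<and> ord2 k \<le> ord2 l" by (rule P2)
  show "bij (f5 (p ^ k) (p ^ l) (p ^ m) :: 'a \<Rightarrow> 'a) \<longleftrightarrow> gcd (p ^ k - 1) (p ^ l + 1) = 1"
  proof
    assume "bij (f5 (p ^ k) (p ^ l) (p ^ m) :: 'a \<Rightarrow> 'a)"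
    hence "inj (f5 (p ^ k) (p ^ l) (p ^ m) :: 'a \<Rightarrow> 'a)" by (rule bij_is_inj)
    thus "gcd (p ^ k - 1) (p ^ l + 1) = 1" using nec[OF assms] by blast
  next
    assume G: "gcd (p ^ k - 1) (p ^ l + 1) = 1"
    hence p2: "p = 2" and le: "ord2 k \<le> ord2 l" using P2 by auto
    define s where "s = multiplicity 2 k"
    obtain k' where kd: "k = 2 ^ s * k'" "\<not> 2 dvd k'"
      using multiplicity_decompose'[of k 2] assms(2) unfolding s_def by auto
    have o2k: "ord2 k = enat s" unfolding ord2_def s_def using assms(2) by simp
    have sl: "2 ^ s dvd l"
    proof (cases "l = 0")
      case False
      hence "s \<le> multiplicity 2 l" using le o2k unfolding ord2_def by simp
      thus ?thesis by (rule multiplicity_dvd')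
    qed simp
    have card2: "card (UNIV::'a set) = 2 ^ (3 * k)" using assms(3) p2 by (simp add: power_mult[symmetric] mult.commute)
    have ch: "CHAR('a) = 2" using ff_char[OF _ card2] by simp
    have "inj (f5 (2^k) (2^l) (2^m) :: 'a \<Rightarrow> 'a)"
      by (rule suff[OF ch card2 kd(1) _ sl]) (use kd in simp)
    hence "inj (f5 (p ^ k) (p ^ l) (p ^ m) :: 'a \<Rightarrow> 'a)" using p2 by simp
    thus "bij (f5 (p ^ k) (p ^ l) (p ^ m) :: 'a \<Rightarrow> 'a)"
      by (simp add: bij_def finite_UNIV_inj_surj)
  qed
qed

end
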